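(* Let $A_1,\dots,A_n$ be formulae built from variables other than $q$ using only $\cdot$, $\backslash$, $/$. For $i=1,\dots,n$ let $Z_i=([]^{-1}(!A_i\cdot\langle\rangle\langle\rangle q))/q$, and let $$\Phi = !((s/s)/!Z_1),\ !Z_1,\ \dots,\ !((s/s)/!Z_n),\ !Z_n,\ !((s/s)/\langle\rangle\langle\rangle q),\ [[q]].$$ Let $\mathcal{S}$ be either $\mathcal{F}^{\mathrm{mult}}_{2018}$ or $\mathcal{F}^{-,\mathrm{mult}}_{2018}$. Then $\Phi$ internalises $\{A_1,\dots,A_n\}$ in $\mathcal{S}$, that is: (1) the sequent $\Phi,s\to s$ is derivable in $\mathcal{S}$; (2) for every $i$, all sequences of tree terms $\Delta_1,\Delta_2$ and every formula $C$, if $\Phi,\Delta_1,A_i,\Delta_2\to C$ is derivable in $\mathcal{S}$ then so is $\Phi,\Delta_1,\Delta_2\to C$; (3) the sequent $!A_1,\dots,!A_n\to\prod\pi_q(\Phi)$ is derivable in $\mathcal{E}^{\mathrm{mult}}$.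
   Context: $s$ and $q$ are two fixed distinct variables. Formulae are built from a countable set of variables and $\mathbf1$ by $\backslash,/,\cdot$ and the unary $\langle\rangle$, $[]^{-1}$, $!$. Stoup-free bracketed calculus $\mathcal{F}^{\mathrm{mult}}_{2018}$: a tree term is a formula or $[\Xi]$ with $\Xi$ a meta-formula; a meta-formula is a finite sequence of tree terms (empty $\Lambda$); sequents $\Xi\to C$; $\Xi(\Theta)$ designates an occurrence of a meta-formula $\Theta$ which is $\Xi$ itself or the full content of some bracket $[\Theta]$ at any depth. Rules: axioms $A\to A$, $\Lambda\to\mathbf1$; ($/L$) from $\Gamma\to B$ and $\Xi(\Delta_1,C,\Delta_2)\to D$ infer $\Xi(\Delta_1,C/B,\Gamma,\Delta_2)\to D$; ($/R$) from $\Gamma,B\to C$ infer $\Gamma\to C/B$; ($\backslash L$) from $\Gamma\to A$ and $\Xi(\Delta_1,C,\Delta_2)\to D$ infer $\Xi(\Delta_1,\Gamma,A\backslash C,\Delta_2)\to D$; ($\backslash R$) from $A,\Gamma\to C$ infer $\Gamma\to A\backslash C$; ($\cdot L$) from $\Xi(\Delta_1,A,B,\Delta_2)\to D$ infer $\Xi(\Delta_1,A\cdot B,\Delta_2)\to D$; ($\cdot R$) from $\Delta\to A$ and $\Gamma\to B$ infer $\Delta,\Gamma\to A\cdot B$; ($\mathbf1L$) from $\Xi(\Delta_1,\Delta_2)\to A$ infer $\Xi(\Delta_1,\mathbf1,\Delta_2)\to A$; ($[]^{-1}L$) from $\Xi(\Delta_1,A,\Delta_2)\to B$ infer $\Xi(\Delta_1,[[]^{-1}A],\Delta_2)\to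 B$; ($[]^{-1}R$) from $[\Xi]\to A$ infer $\Xi\to[]^{-1}A$; ($\langle\rangle L$) from $\Xi(\Delta_1,[A],\Delta_2)\to B$ infer $\Xi(\Delta_1,\langle\rangle A,\Delta_2)\to B$; ($\langle\rangle R$) from $\Xi\to A$ infer $[\Xi]\to\langle\rangle A$; ($!L$) from $\Xi(\Delta_1,A,\Delta_2)\to C$ infer $\Xi(\Delta_1,!A,\Delta_2)\to C$; ($!P_1$) from $\Xi(\Delta_1,!A,\Phi,\Delta_2)\to C$ infer $\Xi(\Delta_1,\Phi,!A,\Delta_2)\to C$; ($!P_2$) the converse; ($!R$) from $!A\to B$ infer $!A\to!B$; ($!C$) from $\Xi(!A,\Gamma_1,[!A,\Gamma_2],\Gamma_3)\to C$ infer $\Xi(!A,\Gamma_1,[[\Gamma_2]],\Gamma_3)\to C$; (cut) from $\Pi\to A$ and $\Xi(\Gamma_1,A,\Gamma_2)\to C$ infer $\Xi(\Gamma_1,\Pi,\Gamma_2)\to C$. $\mathcal{F}^{-,\mathrm{mult}}_{2018}$ is $\mathcal{F}^{\mathrm{mult}}_{2018}$ restricted to formulae without $\mathbf1$, without $\Lambda\to\mathbf1$ and $\mathbf1L$, with $\backslash R,/R$ only if $\Gamma\neq\Lambda$ and $!C$ only if $\Gamma_2\neq\Lambda$. Bracket-free calculus $\mathcal{E}^{\mathrm{mult}}$: formulae without bracket modalities; sequents $\Pi\to A$, $\Pi$ a finite sequence of formulae; axioms $A\to A$, $\Lambda\to\mathbf1$; standard Lambek rules ($\backslash L$: from $\Pi\to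 A$ and $\Delta_1,B,\Delta_2\to C$ infer $\Delta_1,\Pi,A\backslash B,\Delta_2\to C$; $\backslash R$; $/L$: from $\Pi\to A$ and $\Delta_1,B,\Delta_2\to C$ infer $\Delta_1,B/A,\Pi,\Delta_2\to C$; $/R$; $\cdot L$; $\cdot R$; $\mathbf1L$); ($!R$) from $!A_1,\dots,!A_m\to B$ infer $!A_1,\dots,!A_m\to!B$ ($m\geq0$); ($!L$) from $\Delta_1,A,\Delta_2\to C$ infer $\Delta_1,!A,\Delta_2\to C$; ($!P_{1,2}$) permuting $!A$ with any sequence in either direction; ($!C$) from $\Delta_1,!A,!A,\Delta_2\to C$ infer $\Delta_1,!A,\Delta_2\to C$; ($!W$) from $\Delta_1,\Delta_2\to C$ infer $\Delta_1,!A,\Delta_2\to C$; (cut). The projection $\pi_q$ maps formulae by $\pi_q(q)=\mathbf1$, $\pi_q(p)=p$ for variables $p\ne q$, $\pi_q(\mathbf1)=\mathbf1$, commuting with $\backslash,/,\cdot,!$, and $\pi_q(\langle\rangle A)=\pi_q([]^{-1}A)=\pi_q(A)$; on meta-formulae it is applied elementwise and erases brackets. For a sequence $E_1,\dots,E_k$ of formulae, $\prod(E_1,\dots,E_k)=E_1\cdot\ldots\cdot E_k$. *)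

theory Defs
  imports Main
begin

text \<open>Variables are natural numbers (a countable set).
  Under A C is A\C, Over C B is C/B, Dia A is the bracket modality angle-brackets A,
  Box A is the inverse bracket modality A, Bang A is !A.\<close>

datatype fm =
    Var nat
  | One
  | Under fm fm
  | Over fm fm
  | Prod fm fm
  | Dia fm
  | Box fm
  | Bang fm

text \<open>Tree terms: a formula or a bracketed meta-formula; meta-formulae are lists of tree terms.\<close>

datatype tt = F fm | Br "tt list"

text \<open>Contexts: an occurrence of a meta-formula as the whole thing, or as the
  full content of some bracket at any depth.\<close>

datatype ctx = Hole | CBr "tt list" ctx "tt list"

fun plug :: "ctx \<Rightarrow> tt list \<Rightarrow> tt list" where
  "plug Hole Th = Th"
| "plug (CBr L c R) Th = L @ [Br (plug c Th)] @ R"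

fun onefree :: "fm \<Rightarrow> bool" where
  "onefree (Var p) = True"
| "onefree One = False"
| "onefree (Under A B) = (onefree A \<and> onefree B)"
| "onefree (Over A B) = (onefree A \<and> onefree B)"
| "onefree (Prod A B) = (onefree A \<and> onefree B)"
| "onefree (Dia A) = onefree A"
| "onefree (Box A) = onefree A"
| "onefree (Bang A) = onefree A"

fun bracketfree :: "fm \<Rightarrow> bool" where
  "bracketfree (Var p) = True"
| "bracketfree One = True"
| "bracketfree (Under A B) = (bracketfree A \<and> bracketfree B)"
| "bracketfree (Over A B) = (bracketfree A \<and> bracketfree B)"
| "bracketfree (Prod A B) = (bracketfree A \<and> bracketfree B)"
| "bracketfree (Dia A) = False"
| "bracketfree (Box A) = False"
| "bracketfree (Bang A) = bracketfree A"

fun lambek_noq :: "nat \<Rightarrow> fm \<Rightarrow> bool" where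
  "lambek_noq q (Var p) = (p \<noteq> q)"
| "lambek_noq q (Under A B) = (lambek_noq q A \<and> lambek_noq q B)"
| "lambek_noq q (Over A B) = (lambek_noq q A \<and> lambek_noq q B)"
| "lambek_noq q (Prod A B) = (lambek_noq q A \<and> lambek_noq q B)"
| "lambek_noq q _ = False"

fun tt_fms :: "tt \<Rightarrow> fm list" and mf_fms :: "tt list \<Rightarrow> fm list" where
  "tt_fms (F A) = [A]"
| "tt_fms (Br G) = mf_fms G"
| "mf_fms [] = []"
| "mf_fms (t # ts) = tt_fms t @ mf_fms ts"

text \<open>Side condition for the restricted calculus (restr = True): no occurrence of 1
  in any sequent of the derivation.\<close>

definition okF :: "bool \<Rightarrow> tt list \<Rightarrow> fm \<Rightarrow> bool" where
  "okF restr G C \<longleftrightarrow> (restr \<longrightarrow> (list_all onefree (mf_fms G) \<and> onefree C))"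

section \<open>Stoup-free bracketed calculus F^mult_2018 (restr = False)
  and its restriction F^{-,mult}_2018 (restr = True)\<close>

inductive Fder :: "bool \<Rightarrow> tt list \<Rightarrow> fm \<Rightarrow> bool" for m :: bool where
  ax: "okF m [F A] A \<Longrightarrow> Fder m [F A] A"
| oneR: "\<not> m \<Longrightarrow> Fder m [] One"
| overL: "\<lbrakk> Fder m G B; Fder m (plug c (D1 @ [F C] @ D2)) D;
           okF m (plug c (D1 @ [F (Over C B)] @ G @ D2)) D \<rbrakk>
          \<Longrightarrow> Fder m (plug c (D1 @ [F (Over C B)] @ G @ D2)) D"
| overR: "\<lbrakk> Fder m (G @ [F B]) C; m \<longrightarrow> G \<noteq> []; okF m G (Over C B) \<rbrakk>
          \<Longrightarrow> Fder m G (Over C B)"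
| underL: "\<lbrakk> Fder m G A; Fder m (plug c (D1 @ [F C] @ D2)) D;
           okF m (plug c (D1 @ G @ [F (Under A C)] @ D2)) D \<rbrakk>
          \<Longrightarrow> Fder m (plug c (D1 @ G @ [F (Under A C)] @ D2)) D"
| underR: "\<lbrakk> Fder m ([F A] @ G) C; m \<longrightarrow> G \<noteq> []; okF m G (Under A C) \<rbrakk>
          \<Longrightarrow> Fder m G (Under A C)"
| prodL: "\<lbrakk> Fder m (plug c (D1 @ [F A, F B] @ D2)) D;
           okF m (plug c (D1 @ [F (Prod A B)] @ D2)) D \<rbrakk>
          \<Longrightarrow> Fder m (plug c (D1 @ [F (Prod A B)] @ D2)) D"
| prodR: "\<lbrakk> Fder m D A; Fder m G B; okF m (D @ G) (Prod A B) \<rbrakk>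
          \<Longrightarrow> Fder m (D @ G) (Prod A B)"
| oneL: "\<lbrakk> \<not> m; Fder m (plug c (D1 @ D2)) A \<rbrakk>
          \<Longrightarrow> Fder m (plug c (D1 @ [F One] @ D2)) A"
| boxL: "\<lbrakk> Fder m (plug c (D1 @ [F A] @ D2)) B;
           okF m (plug c (D1 @ [Br [F (Box A)]] @ D2)) B \<rbrakk>
          \<Longrightarrow> Fder m (plug c (D1 @ [Br [F (Box A)]] @ D2)) B"
| boxR: "\<lbrakk> Fder m [Br X] A; okF m X (Box A) \<rbrakk> \<Longrightarrow> Fder m X (Box A)"
| diaL: "\<lbrakk> Fder m (plug c (D1 @ [Br [F A]] @ D2)) B;
           okF m (plug c (D1 @ [F (Dia A)] @ D2)) B \<rbrakk>
          \<Longrightarrow> Fder m (plug c (D1 @ [F (Dia A)] @ D2)) B"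
| diaR: "\<lbrakk> Fder m X A; okF m [Br X] (Dia A) \<rbrakk> \<Longrightarrow> Fder m [Br X] (Dia A)"
| bangL: "\<lbrakk> Fder m (plug c (D1 @ [F A] @ D2)) C;
           okF m (plug c (D1 @ [F (Bang A)] @ D2)) C \<rbrakk>
          \<Longrightarrow> Fder m (plug c (D1 @ [F (Bang A)] @ D2)) C"
| bangP1: "\<lbrakk> Fder m (plug c (D1 @ [F (Bang A)] @ P @ D2)) C;
           okF m (plug c (D1 @ P @ [F (Bang A)] @ D2)) C \<rbrakk>
          \<Longrightarrow> Fder m (plug c (D1 @ P @ [F (Bang A)] @ D2)) C"
| bangP2: "\<lbrakk> Fder m (plug c (D1 @ P @ [F (Bang A)] @ D2)) C;
           okF m (plug c (D1 @ [F (Bang A)] @ P @ D2)) C \<rbrakk>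
          \<Longrightarrow> Fder m (plug c (D1 @ [F (Bang A)] @ P @ D2)) C"
| bangR: "\<lbrakk> Fder m [F (Bang A)] B; okF m [F (Bang A)] (Bang B) \<rbrakk>
          \<Longrightarrow> Fder m [F (Bang A)] (Bang B)"
| bangC: "\<lbrakk> Fder m (plug c ([F (Bang A)] @ G1 @ [Br ([F (Bang A)] @ G2)] @ G3)) C;
           m \<longrightarrow> G2 \<noteq> [];
           okF m (plug c ([F (Bang A)] @ G1 @ [Br [Br G2]] @ G3)) C \<rbrakk>
          \<Longrightarrow> Fder m (plug c ([F (Bang A)] @ G1 @ [Br [Br G2]] @ G3)) C"
| cut: "\<lbrakk> Fder m P A; Fder m (plug c (G1 @ [F A] @ G2)) C;
           okF m (plug c (G1 @ P @ G2)) C \<rbrakk>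
          \<Longrightarrow> Fder m (plug c (G1 @ P @ G2)) C"

definition okE :: "fm list \<Rightarrow> fm \<Rightarrow> bool" where
  "okE G C \<longleftrightarrow> list_all bracketfree G \<and> bracketfree C"

inductive Eder :: "fm list \<Rightarrow> fm \<Rightarrow> bool" where
  ax: "okE [A] A \<Longrightarrow> Eder [A] A"
| oneR: "Eder [] One"
| underL: "\<lbrakk> Eder P A; Eder (D1 @ [B] @ D2) C; okE (D1 @ P @ [Under A B] @ D2) C \<rbrakk>
          \<Longrightarrow> Eder (D1 @ P @ [Under A B] @ D2) C"
| underR: "\<lbrakk> Eder (A # G) C; okE G (Under A C) \<rbrakk> \<Longrightarrow> Eder G (Under A C)"
| overL: "\<lbrakk> Eder P A; Eder (D1 @ [B] @ D2) C; okE (D1 @ [Over B A] @ P @ D2) C \<rbrakk>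
          \<Longrightarrow> Eder (D1 @ [Over B A] @ P @ D2) C"
| overR: "\<lbrakk> Eder (G @ [B]) C; okE G (Over C B) \<rbrakk> \<Longrightarrow> Eder G (Over C B)"
| prodL: "\<lbrakk> Eder (D1 @ [A, B] @ D2) C; okE (D1 @ [Prod A B] @ D2) C \<rbrakk>
          \<Longrightarrow> Eder (D1 @ [Prod A B] @ D2) C"
| prodR: "\<lbrakk> Eder D A; Eder G B; okE (D @ G) (Prod A B) \<rbrakk> \<Longrightarrow> Eder (D @ G) (Prod A B)"
| oneL: "\<lbrakk> Eder (D1 @ D2) A; okE (D1 @ [One] @ D2) A \<rbrakk> \<Longrightarrow> Eder (D1 @ [One] @ D2) A"
| bangR: "\<lbrakk> Eder (map Bang As) B; okE (map Bang As) (Bang B) \<rbrakk>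
          \<Longrightarrow> Eder (map Bang As) (Bang B)"
| bangL: "\<lbrakk> Eder (D1 @ [A] @ D2) C; okE (D1 @ [Bang A] @ D2) C \<rbrakk>
          \<Longrightarrow> Eder (D1 @ [Bang A] @ D2) C"
| bangP1: "\<lbrakk> Eder (D1 @ [Bang A] @ P @ D2) C; okE (D1 @ P @ [Bang A] @ D2) C \<rbrakk>
          \<Longrightarrow> Eder (D1 @ P @ [Bang A] @ D2) C"
| bangP2: "\<lbrakk> Eder (D1 @ P @ [Bang A] @ D2) C; okE (D1 @ [Bang A] @ P @ D2) C \<rbrakk>
          \<Longrightarrow> Eder (D1 @ [Bang A] @ P @ D2) C"
| bangC: "\<lbrakk> Eder (D1 @ [Bang A, Bang A] @ D2) C; okE (D1 @ [Bang A] @ D2) C \<rbrakk>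
          \<Longrightarrow> Eder (D1 @ [Bang A] @ D2) C"
| bangW: "\<lbrakk> Eder (D1 @ D2) C; okE (D1 @ [Bang A] @ D2) C \<rbrakk>
          \<Longrightarrow> Eder (D1 @ [Bang A] @ D2) C"
| cut: "\<lbrakk> Eder P A; Eder (G1 @ [A] @ G2) C; okE (G1 @ P @ G2) C \<rbrakk>
          \<Longrightarrow> Eder (G1 @ P @ G2) C"

fun pi_q :: "nat \<Rightarrow> fm \<Rightarrow> fm" where
  "pi_q q (Var p) = (if p = q then One else Var p)"
| "pi_q q One = One"
| "pi_q q (Under A B) = Under (pi_q q A) (pi_q q B)"
| "pi_q q (Over A B) = Over (pi_q q A) (pi_q q B)"
| "pi_q q (Prod A B) = Prod (pi_q q A) (pi_q q B)"
| "pi_q q (Dia A) = pi_q q A"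
| "pi_q q (Box A) = pi_q q A"
| "pi_q q (Bang A) = Bang (pi_q q A)"

definition pi_mf :: "nat \<Rightarrow> tt list \<Rightarrow> fm list" where
  "pi_mf q G = map (pi_q q) (mf_fms G)"

fun prodl :: "fm list \<Rightarrow> fm" where
  "prodl [] = One"
| "prodl [E] = E"
| "prodl (E # Es) = Prod E (prodl Es)"

definition Zf :: "nat \<Rightarrow> fm \<Rightarrow> fm" where
  "Zf q A = Over (Box (Prod (Bang A) (Dia (Dia (Var q))))) (Var q)"

definition Phi :: "nat \<Rightarrow> nat \<Rightarrow> fm list \<Rightarrow> tt list" where
  "Phi s q As =
     concat (map (\<lambda>A. [F (Bang (Over (Over (Var s) (Var s)) (Bang (Zf q A)))),
                        F (Bang (Zf q A))]) As)
     @ [F (Bang (Over (Over (Var s) (Var s)) (Dia (Dia (Var q))))),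
        Br [Br [F (Var q)]]]"

end

theory Submission
  imports Defs
begin

lemma mf_fms_append[simp]: "mf_fms (xs @ ys) = mf_fms xs @ mf_fms ys"
  by (induct xs) auto

lemma lambek_onefree: "lambek_noq q A \<Longrightarrow> onefree A"
  by (induct A) auto

lemma lambek_bf: "lambek_noq q A \<Longrightarrow> bracketfree A"
  by (induct A) auto

lemma lambek_pi: "lambek_noq q A \<Longrightarrow> pi_q q A = A"
  by (induct A) auto

lemma bf_pi: "bracketfree (pi_q q A)"
  by (induct A) auto

lemma Fder_ok: "Fder m G C \<Longrightarrow> okF m G C"
  by (induct rule: Fder.induct) (auto simp: okF_def)

lemma Phi_Cons: "Phi s q (A # As) =
  [F (Bang (Over (Over (Var s) (Var s)) (Bang (Zf q A)))), F (Bang (Zf q A))] @ Phi s q As"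
  by (simp add: Phi_def)

lemma part1:
  assumes "\<forall>A \<in> set As. onefree A"
  shows "Fder m (Phi s q As @ [F (Var s)]) (Var s)"
  using assms
proof (induct As)
  case Nil
  have aq: "Fder m [F (Var q)] (Var q)" by (rule Fder.ax) (simp add: okF_def)
  have d1: "Fder m [Br [F (Var q)]] (Dia (Var q))" using Fder.diaR[OF aq] by (simp add: okF_def)
  have d2: "Fder m [Br [Br [F (Var q)]]] (Dia (Dia (Var q)))" using Fder.diaR[OF d1] by (simp add: okF_def)
  have as: "Fder m [F (Var s)] (Var s)" by (rule Fder.ax) (simp add: okF_def)
  have o1: "Fder m [F (Over (Var s) (Var s)), F (Var s)] (Var s)"
    using Fder.overL[of m "[F (Var s)]" "Var s" Hole "[]" "Var s" "[]" "Var s"] as by (simp add: okF_def)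
  have o2: "Fder m [F (Over (Over (Var s) (Var s)) (Dia (Dia (Var q)))), Br [Br [F (Var q)]], F (Var s)] (Var s)"
    using Fder.overL[of m "[Br [Br [F (Var q)]]]" "Dia (Dia (Var q))" Hole "[]" "Over (Var s) (Var s)" "[F (Var s)]" "Var s"] o1 d2 by (simp add: okF_def)
  show ?case
    using Fder.bangL[of m Hole "[]" "Over (Over (Var s) (Var s)) (Dia (Dia (Var q)))" "[Br [Br [F (Var q)]], F (Var s)]" "Var s"] o2 by (simp add: okF_def Phi_def)
next
  case (Cons A As)
  let ?R = "Phi s q As @ [F (Var s)]"
  let ?Z = "Zf q A"
  have IH: "Fder m ?R (Var s)" using Cons by auto
  have ok: "okF m ?R (Var s)" using Fder_ok[OF IH] .
  have oA: "onefree A" using Cons by auto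
  have as: "Fder m [F (Var s)] (Var s)" by (rule Fder.ax) (simp add: okF_def)
  have az: "Fder m [F (Bang ?Z)] (Bang ?Z)" by (rule Fder.ax) (simp add: okF_def Zf_def oA)
  have o1: "Fder m (F (Over (Var s) (Var s)) # ?R) (Var s)"
    using Fder.overL[of m "?R" "Var s" Hole "[]" "Var s" "[]" "Var s"] as IH ok by (simp add: okF_def)
  have o2: "Fder m (F (Over (Over (Var s) (Var s)) (Bang ?Z)) # F (Bang ?Z) # ?R) (Var s)"
    using Fder.overL[of m "[F (Bang ?Z)]" "Bang ?Z" Hole "[]" "Over (Var s) (Var s)" "?R" "Var s"] o1 az ok by (simp add: okF_def Zf_def oA)
  show ?case
    using Fder.bangL[of m Hole "[]" "Over (Over (Var s) (Var s)) (Bang ?Z)" "F (Bang ?Z) # ?R" "Var s"] o2 ok by (simp add: okF_def Phi_Cons Zf_def oA)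
qed

lemma prodl_Cons: "Es \<noteq> [] \<Longrightarrow> prodl (E # Es) = Prod E (prodl Es)"
  by (cases Es) auto

lemma pi_Phi_ne: "pi_mf q (Phi s q As) \<noteq> []"
  by (simp add: pi_mf_def Phi_def)

lemma part3:
  assumes "\<forall>A \<in> set As. lambek_noq q A" and sq: "s \<noteq> q"
  shows "Eder (map Bang As) (prodl (pi_mf q (Phi s q As)))"
  using assms(1)
proof (induct As)
  case Nil
  have as: "Eder [Var s] (Var s)" by (rule Eder.ax) (simp add: okE_def)
  have e1: "Eder [One, Var s] (Var s)"
    using Eder.oneL[of "[]" "[Var s]" "Var s"] as by (simp add: okE_def)
  have e2: "Eder [One] (Over (Var s) (Var s))"
    using Eder.overR[of "[One]" "Var s" "Var s"] e1 by (simp add: okE_def)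
  have e3: "Eder [] (Over (Over (Var s) (Var s)) One)"
    using Eder.overR[of "[]" One "Over (Var s) (Var s)"] e2 by (simp add: okE_def)
  have e4: "Eder [] (Bang (Over (Over (Var s) (Var s)) One))"
    using Eder.bangR[of "[]" "Over (Over (Var s) (Var s)) One"] e3 by (simp add: okE_def)
  have e5: "Eder [] (Prod (Bang (Over (Over (Var s) (Var s)) One)) One)"
    using Eder.prodR[of "[]" "Bang (Over (Over (Var s) (Var s)) One)" "[]" One] e4 Eder.oneR
    by (simp add: okE_def)
  show ?case using e5 sq by (simp add: pi_mf_def Phi_def)
next
  case (Cons A As)
  have lA: "lambek_noq q A" using Cons by auto
  have IH: "Eder (map Bang As) (prodl (pi_mf q (Phi s q As)))" using Cons by auto
  let ?R = "prodl (pi_mf q (Phi s q As))"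
  let ?Z = "Over (Prod (Bang A) One) One"
  have bfR: "bracketfree ?R"
  proof -
    have "\<forall>x \<in> set (pi_mf q (Phi s q As)). bracketfree x" by (auto simp: pi_mf_def bf_pi)
    moreover have "\<And>Es. (\<forall>x \<in> set Es. bracketfree x) \<Longrightarrow> bracketfree (prodl Es)"
    proof -
      fix Es :: "fm list" show "(\<forall>x \<in> set Es. bracketfree x) \<Longrightarrow> bracketfree (prodl Es)"
        by (induct Es rule: prodl.induct) auto
    qed
    ultimately show ?thesis by blast
  qed
  have bfA: "bracketfree A" using lambek_bf[OF lA] .
  have bfs: "list_all bracketfree (map Bang As)"
    using Cons.prems by (auto simp: list_all_iff intro: lambek_bf)
  have as: "Eder [Var s] (Var s)" by (rule Eder.ax) (simp add: okE_def)
  have w1: "Eder [Bang ?Z, Var s] (Var s)"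
    using Eder.bangW[of "[]" "[Var s]" "Var s" ?Z] as bfA by (simp add: okE_def)
  have w2: "Eder [Bang ?Z] (Over (Var s) (Var s))"
    using Eder.overR[of "[Bang ?Z]" "Var s" "Var s"] w1 bfA by (simp add: okE_def)
  have w3: "Eder [] (Over (Over (Var s) (Var s)) (Bang ?Z))"
    using Eder.overR[of "[]" "Bang ?Z" "Over (Var s) (Var s)"] w2 bfA by (simp add: okE_def)
  have g1: "Eder [] (Bang (Over (Over (Var s) (Var s)) (Bang ?Z)))"
    using Eder.bangR[of "[]" "Over (Over (Var s) (Var s)) (Bang ?Z)"] w3 bfA by (simp add: okE_def)
  have aA: "Eder [Bang A] (Bang A)" by (rule Eder.ax) (simp add: okE_def bfA)
  have o1: "Eder [One] One"
    using Eder.oneL[of "[]" "[]" One] Eder.oneR by (simp add: okE_def)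
  have z1: "Eder [Bang A, One] (Prod (Bang A) One)"
    using Eder.prodR[of "[Bang A]" "Bang A" "[One]" One] aA o1 bfA by (simp add: okE_def)
  have z2: "Eder [Bang A] ?Z"
    using Eder.overR[of "[Bang A]" One "Prod (Bang A) One"] z1 bfA by (simp add: okE_def)
  have g2: "Eder [Bang A] (Bang ?Z)"
    using Eder.bangR[of "[A]" ?Z] z2 bfA by (simp add: okE_def)
  have p1: "Eder (Bang A # map Bang As) (Prod (Bang ?Z) ?R)"
    using Eder.prodR[of "[Bang A]" "Bang ?Z" "map Bang As" ?R] g2 IH bfA bfR bfs by (simp add: okE_def)
  have p2: "Eder (Bang A # map Bang As) (Prod (Bang (Over (Over (Var s) (Var s)) (Bang ?Z))) (Prod (Bang ?Z) ?R))"
    using Eder.prodR[of "[]" "Bang (Over (Over (Var s) (Var s)) (Bang ?Z))" "Bang A # map Bang As"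
      "Prod (Bang ?Z) ?R"] g1 p1 bfA bfR bfs by (simp add: okE_def)
  have eq: "pi_mf q (Phi s q (A # As)) = [Bang (Over (Over (Var s) (Var s)) (Bang ?Z)), Bang ?Z] @ pi_mf q (Phi s q As)"
    using sq lambek_pi[OF lA] by (simp add: pi_mf_def Phi_Cons Zf_def)
  show ?case using p2 pi_Phi_ne by (simp add: eq prodl_Cons)
qed

lemma part2:
  assumes lam: "\<forall>A \<in> set As. lambek_noq q A" and i: "i < length As"
    and H: "Fder m (Phi s q As @ D1 @ [F (As ! i)] @ D2) C"
  shows "Fder m (Phi s q As @ D1 @ D2) C"
proof -
  let ?A = "As ! i"
  let ?Z = "Zf q ?A"
  let ?X = "Prod (Bang ?A) (Dia (Dia (Var q)))"
  let ?f = "\<lambda>A. [F (Bang (Over (Over (Var s) (Var s)) (Bang (Zf q A)))), F (Bang (Zf q A))]"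
  let ?qq = "Br [Br [F (Var q)]]"
  define pre where "pre = concat (map ?f (take i As)) @ [F (Bang (Over (Over (Var s) (Var s)) (Bang ?Z)))]"
  define post where "post = concat (map ?f (drop (Suc i) As)) @ [F (Bang (Over (Over (Var s) (Var s)) (Dia (Dia (Var q)))))]"
  have e: "As = take i As @ ?A # drop (Suc i) As" using i by (simp add: id_take_nth_drop)
  have PhiEq: "Phi s q As = pre @ [F (Bang ?Z)] @ post @ [?qq]"
    apply (subst e)
    apply (simp only: Phi_def map_append concat_append list.map concat.simps)
    apply (simp add: pre_def post_def)
    done
  have lA: "lambek_noq q ?A" using lam i by auto
  have oA: "onefree ?A" using lambek_onefree[OF lA] .
  have ok0: "okF m (pre @ [F (Bang ?Z)] @ post @ [?qq] @ D1 @ [F ?A] @ D2) C"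
    using Fder_ok[OF H] by (simp add: PhiEq)
  then have okc: "m \<longrightarrow> list_all onefree (mf_fms pre) \<and> list_all onefree (mf_fms post)
     \<and> list_all onefree (mf_fms D1) \<and> list_all onefree (mf_fms D2) \<and> onefree C"
    by (simp add: okF_def)
  have s1: "Fder m (pre @ [F (Bang ?Z)] @ post @ [?qq] @ D1 @ [F (Bang ?A)] @ D2) C"
    using Fder.bangL[of m Hole "pre @ [F (Bang ?Z)] @ post @ [?qq] @ D1" ?A D2 C] H okc oA
    by (simp add: PhiEq okF_def Zf_def)
  have s2: "Fder m (pre @ [F (Bang ?Z)] @ post @ [F (Bang ?A)] @ [?qq] @ D1 @ D2) C"
    using Fder.bangP2[of m Hole "pre @ [F (Bang ?Z)] @ post" "[?qq] @ D1" ?A D2 C] s1 okc oA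
    by (simp add: okF_def Zf_def)
  have s3: "Fder m ([F (Bang ?Z)] @ pre @ post @ [F (Bang ?A)] @ [?qq] @ D1 @ D2) C"
    using Fder.bangP2[of m Hole "[]" pre ?Z "post @ [F (Bang ?A)] @ [?qq] @ D1 @ D2" C] s2 okc oA
    by (simp add: okF_def Zf_def)
  have s4: "Fder m ([F (Bang ?Z)] @ pre @ post @ [F (Bang ?A)] @ [Br [F (Dia (Var q))]] @ D1 @ D2) C"
    using Fder.diaL[of m "CBr ([F (Bang ?Z)] @ pre @ post @ [F (Bang ?A)]) Hole (D1 @ D2)" "[]" "Var q" "[]" C]
      s3 okc oA by (simp add: okF_def Zf_def)
  have s5: "Fder m ([F (Bang ?Z)] @ pre @ post @ [F (Bang ?A)] @ [F (Dia (Dia (Var q)))] @ D1 @ D2) C"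
    using Fder.diaL[of m Hole "[F (Bang ?Z)] @ pre @ post @ [F (Bang ?A)]" "Dia (Var q)" "D1 @ D2" C]
      s4 okc oA by (simp add: okF_def Zf_def)
  have s6: "Fder m ([F (Bang ?Z)] @ pre @ post @ [F ?X] @ D1 @ D2) C"
    using Fder.prodL[of m Hole "[F (Bang ?Z)] @ pre @ post" "Bang ?A" "Dia (Dia (Var q))" "D1 @ D2" C]
      s5 okc oA by (simp add: okF_def Zf_def)
  have ax: "Fder m [F ?X] ?X" by (rule Fder.ax) (simp add: okF_def oA)
  have bx: "Fder m [Br [F (Box ?X)]] ?X"
    using Fder.boxL[of m Hole "[]" ?X "[]" ?X] ax oA by (simp add: okF_def)
  have aq: "Fder m [F (Var q)] (Var q)" by (rule Fder.ax) (simp add: okF_def)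
  have zx: "Fder m [Br [F ?Z, F (Var q)]] ?X"
    using Fder.overL[of m "[F (Var q)]" "Var q" "CBr [] Hole []" "[]" "Box ?X" "[]" ?X] aq bx oA
    by (simp add: okF_def Zf_def)
  have s8: "Fder m ([F (Bang ?Z)] @ pre @ post @ [Br [F ?Z, F (Var q)]] @ D1 @ D2) C"
    using Fder.cut[of m "[Br [F ?Z, F (Var q)]]" ?X Hole "[F (Bang ?Z)] @ pre @ post" "D1 @ D2" C]
      zx s6 okc oA by (simp add: okF_def Zf_def)
  have s9: "Fder m ([F (Bang ?Z)] @ pre @ post @ [Br [F (Bang ?Z), F (Var q)]] @ D1 @ D2) C"
    using Fder.bangL[of m "CBr ([F (Bang ?Z)] @ pre @ post) Hole (D1 @ D2)" "[]" ?Z "[F (Var q)]" C]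
      s8 okc oA by (simp add: okF_def Zf_def)
  have s10: "Fder m ([F (Bang ?Z)] @ pre @ post @ [?qq] @ D1 @ D2) C"
    using Fder.bangC[of m Hole ?Z "pre @ post" "[F (Var q)]" "D1 @ D2" C]
      s9 okc oA by (simp add: okF_def Zf_def)
  have s11: "Fder m (pre @ [F (Bang ?Z)] @ post @ [?qq] @ D1 @ D2) C"
    using Fder.bangP1[of m Hole "[]" ?Z pre "post @ [?qq] @ D1 @ D2" C]
      s10 okc oA by (simp add: okF_def Zf_def)
  show ?thesis using s11 by (simp add: PhiEq)
qed

theorem proposition8:
  fixes s q :: nat and As :: "fm list" and restr :: bool
  assumes "s \<noteq> q"
    and "\<forall>A \<in> set As. lambek_noq q A"
  shows "Fder restr (Phi s q As @ [F (Var s)]) (Var s)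
         \<and> (\<forall>i < length As. \<forall>D1 D2 C.
              Fder restr (Phi s q As @ D1 @ [F (As ! i)] @ D2) C
              \<longrightarrow> Fder restr (Phi s q As @ D1 @ D2) C)
         \<and> Eder (map Bang As) (prodl (pi_mf q (Phi s q As)))"
proof -
  have "\<forall>A \<in> set As. onefree A" using assms(2) lambek_onefree by blast
  then show ?thesis
    using part1[of As restr s q] part2[OF assms(2)] part3[OF assms(2) assms(1)] by blast
qed

end
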